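(* Let $n\ge 7$ and let $G$ be one of the following graphs: $K_1\vee \frac{n-1}{4}K_4$ with $n\equiv 1\pmod 4$; $K_1\vee (K_1\cup \frac{n-2}{4}K_4)$ with $n\equiv 2\pmod 4$; $K_1\vee (K_{1,1}\cup \frac{n-3}{4}K_4)$ with $n\equiv 3\pmod 4$; or $K_1\vee (K_{1,s}^+\cup \frac{n-s-2}{4}K_4)$ with $2\le s\le n-6$. Then $q(G)<q(K_{1,1,n-2}^+)$.
   Context: $q(G)$ denotes the largest eigenvalue of the signless Laplacian matrix $Q(G)=D(G)+A(G)$ ($A(G)$ adjacency matrix, $D(G)$ diagonal degree matrix). $K_m$ is the complete graph on $m$ vertices, $kH$ is the disjoint union of $k$ copies of $H$, $\cup$ is disjoint union, and $G\vee H$ is the join (disjoint union plus all edges between $V(G)$ and $V(H)$). $K_{1,s}$ is the star with $s$ leaves; for $s\ge2$, $K_{1,s}^+$ is obtained from $K_{1,s}$ by adding one edge between two leaves. $K_{1,1,n-2}^+$ is obtained from the complete tripartite graph $K_{1,1,n-2}$ by adding one edge inside the part of size $n-2$. In the last family it is implicit that $\frac{n-s-2}{4}$ is an integer. *)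

theory Defs
  imports Main "Jordan_Normal_Form.Char_Poly"
begin

text \<open>A finite simple graph on the vertex set {0..<n}: a pair (n, E) with adjacency E.
  Only E restricted to {0..<n} matters; all constructions below produce
  symmetric, irreflexive relations.\<close>
type_synonym graph = "nat \<times> (nat \<Rightarrow> nat \<Rightarrow> bool)"

definition gorder :: "graph \<Rightarrow> nat" where "gorder G = fst G"
definition adj :: "graph \<Rightarrow> nat \<Rightarrow> nat \<Rightarrow> bool" where "adj G = snd G"

definition degree :: "graph \<Rightarrow> nat \<Rightarrow> nat" where
  "degree G i = card {j. j < gorder G \<and> adj G i j}"

definition signless_laplacian :: "graph \<Rightarrow> real mat" where
  "signless_laplacian G = mat (gorder G) (gorder G)
     (\<lambda>(i,j). (if i = j then real (degree G i) else 0) + (if adj G i j then 1 else 0))"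

definition q :: "graph \<Rightarrow> real" where
  "q G = Max {k. eigenvalue (signless_laplacian G) k}"

definition complete :: "nat \<Rightarrow> graph" where
  "complete m = (m, \<lambda>i j. i < m \<and> j < m \<and> i \<noteq> j)"

definition gunion :: "graph \<Rightarrow> graph \<Rightarrow> graph" where
  "gunion G H = (gorder G + gorder H, \<lambda>i j.
     (i < gorder G \<and> j < gorder G \<and> adj G i j) \<or>
     (gorder G \<le> i \<and> gorder G \<le> j \<and> i < gorder G + gorder H \<and> j < gorder G + gorder H
        \<and> adj H (i - gorder G) (j - gorder G)))"

definition gjoin :: "graph \<Rightarrow> graph \<Rightarrow> graph" where
  "gjoin G H = (gorder G + gorder H, \<lambda>i j.
     adj (gunion G H) i j \<or>
     (i < gorder G \<and> gorder G \<le> j \<and> j < gorder G + gorder H) \<or>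
     (j < gorder G \<and> gorder G \<le> i \<and> i < gorder G + gorder H))"

fun copies :: "nat \<Rightarrow> graph \<Rightarrow> graph" where
  "copies 0 H = (0, \<lambda>i j. False)"
| "copies (Suc k) H = gunion H (copies k H)"

definition star :: "nat \<Rightarrow> graph" where
  "star s = (s + 1, \<lambda>i j. i \<le> s \<and> j \<le> s \<and> i \<noteq> j \<and> (i = 0 \<or> j = 0))"

definition star_plus :: "nat \<Rightarrow> graph" where
  "star_plus s = (s + 1, \<lambda>i j. adj (star s) i j \<or> {i, j} = {1, 2})"

text \<open>K_{1,1,n-2}^+: vertices 0,1 form the two singleton parts, {2..n-1} the big part,
  with the extra edge 2--3 inside the big part.\<close>
definition K11plus :: "nat \<Rightarrow> graph" where
  "K11plus n = (n, \<lambda>i j. i < n \<and> j < n \<and> i \<noteq> j \<and> (i < 2 \<or> j < 2 \<or> {i, j} = {2, 3}))"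

end

theory Submission
  imports Defs
begin


lemma Q_carrier: "signless_laplacian G \<in> carrier_mat (gorder G) (gorder G)"
  unfolding signless_laplacian_def by simp

lemma Q_entry: "i < gorder G \<Longrightarrow> j < gorder G \<Longrightarrow> signless_laplacian G $$ (i,j) =
   (if i = j then real (degree G i) else 0) + (if adj G i j then 1 else 0)"
  unfolding signless_laplacian_def by simp

lemma Q_nonneg: "i < gorder G \<Longrightarrow> j < gorder G \<Longrightarrow> signless_laplacian G $$ (i,j) \<ge> 0"
  by (simp add: Q_entry)

lemma rowsum:
  assumes i: "i < gorder G"
  shows "(\<Sum>j<gorder G. signless_laplacian G $$ (i,j) * x j)
       = (\<Sum>j\<in>{j. j < gorder G \<and> adj G i j}. x i + x j)"
proof -
  let ?N = "gorder G"
  let ?S = "{j. j < ?N \<and> adj G i j}"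
  have fS: "finite ?S" by simp
  have "(\<Sum>j<?N. signless_laplacian G $$ (i,j) * x j)
      = (\<Sum>j<?N. (if i = j then real (degree G i) * x j else 0) + (if adj G i j then x j else 0))"
    by (rule sum.cong, simp, simp add: Q_entry i distrib_right)
  also have "\<dots> = (\<Sum>j<?N. (if i = j then real (degree G i) * x j else 0)) + (\<Sum>j<?N. (if adj G i j then x j else 0))"
    by (rule sum.distrib)
  also have "(\<Sum>j<?N. (if i = j then real (degree G i) * x j else 0)) = real (degree G i) * x i"
    using i by (simp add: sum.delta)
  also have "(\<Sum>j<?N. (if adj G i j then x j else 0)) = (\<Sum>j\<in>?S. x j)"
    by (subst sum.inter_filter[symmetric], auto intro: sum.cong)
  also have "real (degree G i) * x i = (\<Sum>j\<in>?S. x i)"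
    by (simp add: degree_def)
  finally show ?thesis by (simp add: sum.distrib)
qed

lemma finite_eig: "finite {k. eigenvalue (signless_laplacian G) k}"
proof -
  have A: "signless_laplacian G \<in> carrier_mat (gorder G) (gorder G)" by (rule Q_carrier)
  define CP where "CP = char_poly (signless_laplacian G)"
  from degree_monic_char_poly[OF A] have "coeff CP (gorder G) = 1" unfolding CP_def by auto
  hence "CP \<noteq> 0" by auto
  from poly_roots_finite[OF this] have "finite {k. poly CP k = 0}" .
  moreover have "{k. eigenvalue (signless_laplacian G) k} = {k. poly CP k = 0}"
    unfolding CP_def eigenvalue_root_char_poly[OF A] by simp
  ultimately show ?thesis by simp
qed

lemma Qv_entry: assumes "i < gorder G" "v \<in> carrier_vec (gorder G)"
  shows "(signless_laplacian G *\<^sub>v v) $ i = (\<Sum>j<gorder G. signless_laplacian G $$ (i,j) * v $ j)"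
proof -
  have "(signless_laplacian G *\<^sub>v v) $ i = row (signless_laplacian G) i \<bullet> v"
      using assms by (simp add: signless_laplacian_def)
  also have "\<dots> = (\<Sum>j<gorder G. signless_laplacian G $$ (i,j) * v $ j)"
      using assms unfolding scalar_prod_def
      by (auto simp: signless_laplacian_def lessThan_atLeast0 intro!: sum.cong)
  finally show ?thesis .
qed

lemma eig_from_vec:
  assumes "v \<in> carrier_vec (gorder G)" "v \<noteq> 0\<^sub>v (gorder G)"
    and "\<And>i. i < gorder G \<Longrightarrow> (\<Sum>j<gorder G. signless_laplacian G $$ (i,j) * v $ j) = k * v $ i"
  shows "eigenvalue (signless_laplacian G) k"
proof -
  have "signless_laplacian G *\<^sub>v v = k \<cdot>\<^sub>v v"
  proof (rule eq_vecI)
    fix i assume "i < dim_vec (k \<cdot>\<^sub>v v)"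
    hence i: "i < gorder G" using assms(1) by simp
    have "(signless_laplacian G *\<^sub>v v) $ i = row (signless_laplacian G) i \<bullet> v"
      using i by (simp add: signless_laplacian_def)
    also have "\<dots> = (\<Sum>j<gorder G. signless_laplacian G $$ (i,j) * v $ j)"
      using i assms(1) unfolding scalar_prod_def
      by (auto simp: signless_laplacian_def lessThan_atLeast0 intro!: sum.cong)
    also have "\<dots> = (k \<cdot>\<^sub>v v) $ i" using assms(3)[OF i] i assms(1) by simp
    finally show "(signless_laplacian G *\<^sub>v v) $ i = (k \<cdot>\<^sub>v v) $ i" .
  qed (use assms(1) in \<open>simp add: signless_laplacian_def\<close>)
  thus ?thesis using assms unfolding eigenvalue_def eigenvector_def
    by (auto simp: signless_laplacian_def)
qed

lemma CW:
  assumes wpos: "\<And>j. j < gorder G \<Longrightarrow> w j > 0"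
    and rb: "\<And>i. i < gorder G \<Longrightarrow> (\<Sum>j<gorder G. signless_laplacian G $$ (i,j) * w j) \<le> T * w i"
    and ev: "eigenvalue (signless_laplacian G) k"
  shows "k \<le> T"
proof -
  let ?N = "gorder G"
  let ?Q = "signless_laplacian G"
  from ev obtain v where v: "v \<in> carrier_vec ?N" "v \<noteq> 0\<^sub>v ?N" "?Q *\<^sub>v v = k \<cdot>\<^sub>v v"
    unfolding eigenvalue_def eigenvector_def by (auto simp: signless_laplacian_def)
  have "\<exists>j<?N. v $ j \<noteq> 0"
  proof (rule ccontr)
    assume "\<not> ?thesis"
    hence "v = 0\<^sub>v ?N" using v(1) by (intro eq_vecI) auto
    with v(2) show False by simp
  qed
  then obtain j0 where j0: "j0 < ?N" "v $ j0 \<noteq> 0" by blast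
  define r where "r j = \<bar>v $ j\<bar> / w j" for j
  have fin: "finite (r ` {..<?N})" by simp
  have ne: "r ` {..<?N} \<noteq> {}" using j0 by auto
  obtain i where i: "i < ?N" "r i = Max (r ` {..<?N})"
    using Max_in[OF fin ne] by auto
  have rle: "r j \<le> r i" if "j < ?N" for j using i that fin by auto
  have "r j0 > 0" using j0 wpos[OF j0(1)] by (simp add: r_def)
  hence ri: "r i > 0" using rle[OF j0(1)] by linarith
  have vle: "\<bar>v $ j\<bar> \<le> r i * w j" if "j < ?N" for j
    using rle[OF that] wpos[OF that] by (simp add: r_def field_simps)
  have vi: "\<bar>v $ i\<bar> = r i * w i" using wpos[OF i(1)] by (simp add: r_def)
  have "k * v $ i = (?Q *\<^sub>v v) $ i" using v(3) i v(1) by simp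
  also have "\<dots> = (\<Sum>j<?N. ?Q $$ (i,j) * v $ j)"
    using Qv_entry[OF i(1) v(1)] by simp
  finally have eq: "k * v $ i = (\<Sum>j<?N. ?Q $$ (i,j) * v $ j)" .
  have "\<bar>k\<bar> * \<bar>v $ i\<bar> = \<bar>\<Sum>j<?N. ?Q $$ (i,j) * v $ j\<bar>" by (simp add: eq[symmetric] abs_mult)
  also have "\<dots> \<le> (\<Sum>j<?N. \<bar>?Q $$ (i,j) * v $ j\<bar>)" by (rule sum_abs)
  also have "\<dots> \<le> (\<Sum>j<?N. ?Q $$ (i,j) * (r i * w j))"
    by (rule sum_mono) (use Q_nonneg[OF i(1)] vle in \<open>auto simp: abs_mult intro: mult_left_mono\<close>)
  also have "\<dots> = r i * (\<Sum>j<?N. ?Q $$ (i,j) * w j)"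
    by (simp add: sum_distrib_left algebra_simps)
  also have "\<dots> \<le> r i * (T * w i)" using rb[OF i(1)] ri by (simp add: mult_left_mono)
  also have "\<dots> = T * \<bar>v $ i\<bar>" using vi by simp
  finally have "\<bar>k\<bar> * \<bar>v $ i\<bar> \<le> T * \<bar>v $ i\<bar>" .
  moreover have "\<bar>v $ i\<bar> > 0" using vi ri wpos[OF i(1)] by simp
  ultimately have "\<bar>k\<bar> \<le> T" by simp
  thus ?thesis by simp
qed



lemma go_pair[simp]: "gorder (a,b) = a" "adj (a,b) = b" by (simp_all add: gorder_def adj_def)

lemma gorder_gunion[simp]: "gorder (gunion G H) = gorder G + gorder H"
  by (simp add: gunion_def)
lemma gorder_gjoin[simp]: "gorder (gjoin G H) = gorder G + gorder H"
  by (simp add: gjoin_def)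
lemma gorder_complete[simp]: "gorder (complete m) = m" by (simp add: complete_def)
lemma adj_complete[simp]: "adj (complete m) i j = (i < m \<and> j < m \<and> i \<noteq> j)" by (simp add: complete_def)
lemma gorder_copies[simp]: "gorder (copies k H) = k * gorder H"
  by (induction k) auto

lemma adj_copies4: "adj (copies k (complete 4)) i j \<longleftrightarrow> i < 4*k \<and> j < 4*k \<and> i \<noteq> j \<and> i div 4 = j div 4"
proof (induction k arbitrary: i j)
  case 0
  then show ?case by simp
next
  case (Suc k)
  have "adj (copies (Suc k) (complete 4)) i j \<longleftrightarrow>
     (i < 4 \<and> j < 4 \<and> i \<noteq> j) \<or> (4 \<le> i \<and> 4 \<le> j \<and> i < 4 + 4*k \<and> j < 4 + 4*k \<and> adj (copies k (complete 4)) (i-4) (j-4))"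
    by (auto simp add: gunion_def)
  also have "\<dots> \<longleftrightarrow> i < 4*Suc k \<and> j < 4*Suc k \<and> i \<noteq> j \<and> i div 4 = j div 4"
  proof -
    have d: "a div 4 = Suc ((a-4) div 4)" if "4 \<le> a" for a :: nat
    proof -
      have "a = (a-4) + 4" using that by simp
      hence "a div 4 = ((a-4) + 4) div 4" by simp
      also have "\<dots> = Suc ((a-4) div 4)" by simp
      finally show ?thesis .
    qed
    have z: "a div 4 = 0" if "a < 4" for a :: nat using that by simp
    show ?thesis
    proof (cases "i < 4"; cases "j < 4")
      assume "i < 4" "j < 4" thus ?thesis by (simp add: z Suc.IH)
    next
      assume a: "i < 4" "\<not> j < 4" thus ?thesis using z[of i] d[of j] by (auto simp: Suc.IH)
    next
      assume a: "\<not> i < 4" "j < 4" thus ?thesis using z[of j] d[of i] by (auto simp: Suc.IH)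
    next
      assume a: "\<not> i < 4" "\<not> j < 4" thus ?thesis using d[of i] d[of j] unfolding Suc.IH by (intro iffI; elim conjE disjE; simp; linarith)
    qed
  qed
  finally show ?case .
qed

definition fam_adj :: "nat \<Rightarrow> nat \<Rightarrow> (nat \<Rightarrow> nat \<Rightarrow> bool) \<Rightarrow> nat \<Rightarrow> nat \<Rightarrow> bool" where
  "fam_adj m k XA i j = (i < m+1+4*k \<and> j < m+1+4*k \<and>
     ((i = 0 \<and> j \<noteq> 0) \<or> (j = 0 \<and> i \<noteq> 0) \<or> (1 \<le> i \<and> i \<le> m \<and> 1 \<le> j \<and> j \<le> m \<and> XA (i-1) (j-1))
      \<or> (m < i \<and> m < j \<and> i \<noteq> j \<and> (i-m-1) div 4 = (j-m-1) div 4)))"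

lemma adj_join1: "adj (gjoin (complete 1) H) i j \<longleftrightarrow> i < 1 + gorder H \<and> j < 1 + gorder H \<and>
   ((i=0 \<and> j\<noteq>0) \<or> (j=0 \<and> i\<noteq>0) \<or> (i\<noteq>0 \<and> j\<noteq>0 \<and> adj H (i-1) (j-1)))"
  by (auto simp: gjoin_def gunion_def)

lemma famA: "adj (gjoin (complete 1) (copies k (complete 4))) i j = fam_adj 0 k XA i j"
  unfolding adj_join1 adj_copies4 fam_adj_def gorder_copies gorder_complete
  by (cases "i = 0"; cases "j = 0"; simp; linarith)

lemma famX: "adj (gjoin (complete 1) (gunion X (copies k (complete 4)))) i j = fam_adj (gorder X) k (adj X) i j"
proof -
  have h: "adj (gunion X (copies k (complete 4))) a b \<longleftrightarrow>
     (a < gorder X \<and> b < gorder X \<and> adj X a b) \<or>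
     (gorder X \<le> a \<and> gorder X \<le> b \<and> a < gorder X + 4*k \<and> b < gorder X + 4*k \<and>
       a - gorder X \<noteq> b - gorder X \<and> (a - gorder X) div 4 = (b - gorder X) div 4)" for a b
    by (simp add: gunion_def adj_copies4 algebra_simps) (auto simp add: adj_def)
  show ?thesis
    unfolding adj_join1 h fam_adj_def gorder_gunion gorder_copies gorder_complete
    by (cases "i = 0"; cases "j = 0"; simp; linarith)
qed



lemma fam_deg:
  assumes k: "k \<ge> 1" and adjG: "\<And>i j. adj G i j = fam_adj m k XA i j" and N: "gorder G = m+1+4*k"
    and i: "i = m+1 \<or> i = m+2"
  shows "degree G i = 4"
proof -
  have "{j. j < gorder G \<and> adj G i j} = {0} \<union> ({m+1, m+2, m+3, m+4} - {i})"
    using i k unfolding adjG N fam_adj_def by auto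
  moreover have "card ({0} \<union> ({m+1, m+2, m+3, m+4} - {i})) = 4" using i by auto
  ultimately show ?thesis unfolding degree_def by simp
qed

lemma fam_nonempty:
  assumes k: "k \<ge> 1" and adjG: "\<And>i j. adj G i j = fam_adj m k XA i j" and N: "gorder G = m+1+4*k"
  shows "eigenvalue (signless_laplacian G) 3"
proof -
  define v where "v = vec (gorder G) (\<lambda>j. (if j = m+1 then 1 else 0) - (if j = m+2 then (1::real) else 0))"
  have vc: "v \<in> carrier_vec (gorder G)" unfolding v_def by simp
  have "v $ (m+1) = 1" unfolding v_def using N k by simp
  hence vnz: "v \<noteq> 0\<^sub>v (gorder G)" using N k by auto
  show ?thesis
  proof (rule eig_from_vec[OF vc vnz])
    fix i assume i: "i < gorder G"
    have m1: "m+1 < gorder G" "m+2 < gorder G" using N k by auto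
    have "(\<Sum>j<gorder G. signless_laplacian G $$ (i,j) * v $ j) =
       (\<Sum>j<gorder G. (if j = m+1 then signless_laplacian G $$ (i,j) else 0)
          - (if j = m+2 then signless_laplacian G $$ (i,j) else 0))"
      by (rule sum.cong) (auto simp: v_def)
    also have "\<dots> = signless_laplacian G $$ (i,m+1) - signless_laplacian G $$ (i,m+2)"
      using m1 by (simp add: sum_subtractf sum.delta')
    also have "\<dots> = 3 * v $ i"
      using i m1 fam_deg[OF k adjG N, of "m+1"] fam_deg[OF k adjG N, of "m+2"]
      unfolding Q_entry[OF i m1(1)] Q_entry[OF i m1(2)] 
      by (auto simp: v_def adjG fam_adj_def N)
    finally show "(\<Sum>j<gorder G. signless_laplacian G $$ (i,j) * v $ j) = 3 * v $ i" .
  qed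
qed



lemma nb_sum_le:
  assumes "finite S" "{j. j < gorder G \<and> adj G i j} \<subseteq> S" "\<And>j. j \<in> S \<Longrightarrow> f j \<ge> (0::real)"
  shows "(\<Sum>j\<in>{j. j < gorder G \<and> adj G i j}. f j) \<le> (\<Sum>j\<in>S. f j)"
  by (rule sum_mono2) (use assms in auto)

lemma div4_bounds: "(x::nat) div 4 = r \<Longrightarrow> 4*r \<le> x \<and> x < 4*r + 4"
proof -
  assume a: "x div 4 = r"
  have "x = 4*(x div 4) + x mod 4" by simp
  moreover have "x mod 4 < 4" by simp
  ultimately show ?thesis using a by linarith
qed

lemma q_le:
  assumes "eigenvalue (signless_laplacian G) e" "\<And>k. eigenvalue (signless_laplacian G) k \<Longrightarrow> k \<le> T"
  shows "q G \<le> T"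
  unfolding q_def using assms finite_eig[of G] by (subst Max_le_iff) auto

lemma q_ge:
  assumes "eigenvalue (signless_laplacian G) e"
  shows "e \<le> q G"
  unfolding q_def using assms finite_eig[of G] by (intro Max_ge) auto

lemma fam_main:
  assumes k: "k \<ge> 1" and adjG: "\<And>i j. adj G i j = fam_adj m k XA i j" and N: "gorder G = m+1+4*k"
    and wpos: "\<And>j. w j > 0" and w0: "w 0 = A" and wK: "\<And>j. m < j \<Longrightarrow> w j = K"
    and apex: "real (m+4*k) * A + (\<Sum>j\<in>{1..<m+1}. w j) + real (4*k) * K \<le> T * A"
    and k4: "A + 7 * K \<le> T * K"
    and X: "\<And>i. 1 \<le> i \<Longrightarrow> i \<le> m \<Longrightarrow> (\<Sum>j\<in>{j. j < gorder G \<and> adj G i j}. w i + w j) \<le> T * w i"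
  shows "q G \<le> T"
proof (rule q_le[OF fam_nonempty[OF k adjG N]])
  fix e assume ev: "eigenvalue (signless_laplacian G) e"
  show "e \<le> T"
  proof (rule CW[OF _ _ ev])
    show "\<And>j. j < gorder G \<Longrightarrow> 0 < w j" using wpos by simp
    fix i assume i: "i < gorder G"
    have rs: "(\<Sum>j<gorder G. signless_laplacian G $$ (i, j) * w j) = (\<Sum>j\<in>{j. j < gorder G \<and> adj G i j}. w i + w j)"
      by (rule rowsum[OF i])
    show "(\<Sum>j<gorder G. signless_laplacian G $$ (i, j) * w j) \<le> T * w i"
      unfolding rs
    proof (cases "i = 0")
      case True
      have nb: "{j. j < gorder G \<and> adj G i j} = {1..<m+1+4*k}"
        using True unfolding adjG N fam_adj_def by auto
      have "(\<Sum>j\<in>{1..<m+1+4*k}. w i + w j) = real (m+4*k) * A + (\<Sum>j\<in>{1..<m+1+4*k}. w j)"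
        using True w0 by (simp add: sum.distrib)
      also have "(\<Sum>j\<in>{1..<m+1+4*k}. w j) = (\<Sum>j\<in>{1..<m+1}. w j) + (\<Sum>j\<in>{m+1..<m+1+4*k}. w j)"
        by (rule sum.atLeastLessThan_concat[symmetric]) auto
      also have "(\<Sum>j\<in>{m+1..<m+1+4*k}. w j) = (\<Sum>j\<in>{m+1..<m+1+4*k}. K)"
        by (rule sum.cong) (auto simp: wK)
      also have "\<dots> = real (4*k) * K" by simp
      finally show "(\<Sum>j\<in>{j. j < gorder G \<and> adj G i j}. w i + w j) \<le> T * w i"
        unfolding nb using apex True w0 by (simp add: add.assoc)
    next
      case False
      show "(\<Sum>j\<in>{j. j < gorder G \<and> adj G i j}. w i + w j) \<le> T * w i"
      proof (cases "i \<le> m")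
        case True
        then show ?thesis using X False by simp
      next
        case im: False
        define qq where "qq = (i-m-1) div 4"
        define b where "b = m+1+4*qq"
        have ib: "b \<le> i" "i < b + 4" using div4_bounds[OF qq_def[symmetric]] im unfolding b_def by auto
        have "qq < k" using ib i N unfolding b_def by linarith
        hence bN: "b + 4 \<le> m+1+4*k" unfolding b_def by linarith
        have sub: "{j. j < gorder G \<and> adj G i j} \<subseteq> insert 0 ({b..<b+4} - {i})"
        proof
          fix j assume "j \<in> {j. j < gorder G \<and> adj G i j}"
          hence j: "j < gorder G" "fam_adj m k XA i j" using adjG by auto
          show "j \<in> insert 0 ({b..<b+4} - {i})"
          proof (cases "j = 0")
            case False
            with j im have jm: "m < j" "i \<noteq> j" "(j-m-1) div 4 = qq" unfolding fam_adj_def qq_def by auto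
            from div4_bounds[OF jm(3)] jm show ?thesis unfolding b_def by auto
          qed simp
        qed
        have "(\<Sum>j\<in>{j. j < gorder G \<and> adj G i j}. w i + w j) \<le> (\<Sum>j\<in>insert 0 ({b..<b+4} - {i}). w i + w j)"
          by (rule nb_sum_le[OF _ sub]) (auto intro: add_nonneg_nonneg less_imp_le wpos)
        also have "\<dots> = (w i + w 0) + (\<Sum>j\<in>{b..<b+4} - {i}. w i + w j)"
          using im unfolding b_def by (subst sum.insert) auto
        also have "(\<Sum>j\<in>{b..<b+4} - {i}. w i + w j) = (\<Sum>j\<in>{b..<b+4} - {i}. 2 * K)"
          using im ib unfolding b_def by (intro sum.cong) (auto simp: wK)
        also have "\<dots> = 6 * K"
        proof -
          have "card ({b..<b+4} - {i}) = 3" using ib by (subst card_Diff_singleton) auto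
          thus ?thesis by simp
        qed
        finally show ?thesis using wK[of i] im w0 k4 by simp
      qed
    qed
  qed
qed



definition fK :: "real \<Rightarrow> real \<Rightarrow> real" where
  "fK n x = (x-n)*(x-4)*(x-2) - 4*(x-2) - 2*(n-4)*(x-4)"

lemma fK_T: "fK n (n + 43/25) < 0"
proof -
  have "fK n (n + 43/25) = -(7/25)*(n - 1299/175)^2 - 104/175"
    unfolding fK_def power2_eq_square by (simp add: field_simps) algebra
  also have "\<dots> < 0"
  proof -
    have "0 \<le> (n - 1299/175)^2" by simp
    thus ?thesis by linarith
  qed
  finally show ?thesis .
qed

lemma fK_big: "n \<ge> 7 \<Longrightarrow> fK n (n + 4) > 0"
  unfolding fK_def by (simp add: algebra_simps) (smt (verit) mult_nonneg_nonneg)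

lemma fK_root: assumes "n \<ge> 7" shows "\<exists>x. x > n + 43/25 \<and> fK n x = 0"
proof -
  have c: "continuous_on {n + 43/25 .. n + 4} (fK n)" unfolding fK_def by (intro continuous_intros)
  have "\<exists>x. n + 43/25 \<le> x \<and> x \<le> n + 4 \<and> fK n x = 0"
    by (rule IVT'[OF _ _ _ c]) (use fK_T[of n] fK_big[OF assms] in auto)
  then obtain x where x: "n + 43/25 \<le> x" "x \<le> n + 4" "fK n x = 0" by blast
  moreover have "x \<noteq> n + 43/25"
  proof
    assume "x = n + 43/25"
    with x(3) fK_T[of n] show False by simp
  qed
  ultimately have "n + 43/25 < x" by (simp add: order_le_neq_trans)
  thus ?thesis using x by auto
qed

lemma gorder_K11[simp]: "gorder (K11plus n) = n" by (simp add: K11plus_def)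
lemma adj_K11: "adj (K11plus n) i j = (i<n \<and> j<n \<and> i\<noteq>j \<and> (i<2 \<or> j<2 \<or> {i,j}={2,3}))"
  by (simp add: K11plus_def)

lemma pair23: "({a,b} = {2,3::nat}) \<longleftrightarrow> (a=2 \<and> b=3) \<or> (a=3 \<and> b=2)"
  by (auto simp: doubleton_eq_iff)

lemma k11_eig:
  assumes n: "n \<ge> 7" and xg: "x > real n + 43/25" and f0: "fK (real n) x = 0"
  shows "eigenvalue (signless_laplacian (K11plus n)) x"
proof -
  define p where "p = 2/(x-4)"
  define r where "r = 2/(x-2)"
  define u where "u j = (if j < 2 then 1 else if j < 4 then p else r)" for j :: nat
  define v where "v = vec n u"
  have x4: "x - 4 > 0" "x - 2 > 0" using xg n by auto
  have vc: "v \<in> carrier_vec (gorder (K11plus n))" unfolding v_def by simp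
  have "v $ 0 = 1" unfolding v_def u_def using n by simp
  hence vnz: "v \<noteq> 0\<^sub>v (gorder (K11plus n))" using n by auto
  have vu: "v $ j = u j" if "j < n" for j using that unfolding v_def by simp
  have su: "(\<Sum>j<n. u j) = 2 + 2*p + real (n-4) * r"
  proof -
    have "(\<Sum>j<n. u j) = (\<Sum>j<4. u j) + (\<Sum>j\<in>{4..<n}. u j)"
      using n sum.atLeastLessThan_concat[of 0 4 n u] by (simp add: lessThan_atLeast0)
    also have "(\<Sum>j<4. u j) = 2 + 2*p" by (simp add: u_def numeral_eq_Suc)
    also have "(\<Sum>j\<in>{4..<n}. u j) = (\<Sum>j\<in>{4..<n}. r)" by (rule sum.cong) (auto simp: u_def)
    finally show ?thesis by simp
  qed
  have key: "x = real n + 2*p + real (n-4) * r"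
  proof -
    have "(x - n)*(x-4)*(x-2) = 4*(x-2) + 2*(real n-4)*(x-4)" using f0 unfolding fK_def by simp
    hence e: "(x - n)*((x-4)*(x-2)) = 4*(x-2) + 2*(real n-4)*(x-4)" by (simp add: algebra_simps)
    have "2*p + (real n - 4) * r = (4*(x-2) + 2*(real n-4)*(x-4)) / ((x-4)*(x-2))"
      unfolding p_def r_def using x4 by (simp add: field_simps)
    also have "\<dots> = x - n" unfolding e[symmetric] using x4 by simp
    finally have "x - n = 2*p + (real n - 4) * r" by simp
    moreover have "real (n-4) = real n - 4" using n by simp
    ultimately show ?thesis by simp
  qed
  show ?thesis
  proof (rule eig_from_vec[OF vc vnz])
    fix i assume i: "i < gorder (K11plus n)"
    hence i': "i < n" by simp
    have "(\<Sum>j<gorder (K11plus n). signless_laplacian (K11plus n) $$ (i,j) * v $ j)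
        = (\<Sum>j\<in>{j. j < gorder (K11plus n) \<and> adj (K11plus n) i j}. v $ i + v $ j)"
      by (rule rowsum[OF i])
    also have "\<dots> = (\<Sum>j\<in>{j. j < n \<and> adj (K11plus n) i j}. u i + u j)"
      by (rule sum.cong) (auto simp: vu i')
    also have "\<dots> = x * v $ i"
    proof (cases "i < 2")
      case True
      have "{j. j < n \<and> adj (K11plus n) i j} = {..<n} - {i}" using True i' by (auto simp: adj_K11)
      hence "(\<Sum>j\<in>{j. j < n \<and> adj (K11plus n) i j}. u i + u j) = (\<Sum>j<n. u i + u j) - (u i + u i)"
        using i' by (simp add: sum_diff1)
      also have "\<dots> = real n + (2 + 2*p + real (n-4) * r) - 2"
      proof -
        have ui: "u i = 1" using True by (simp add: u_def)
        show ?thesis by (simp add: sum.distrib su ui)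
      qed
      also have "\<dots> = x * v $ i" using key True vu[OF i'] by (simp add: u_def)
      finally show ?thesis .
    next
      case F2: False
      show ?thesis
      proof (cases "i < 4")
        case True
        have "{j. j < n \<and> adj (K11plus n) i j} = {0, 1, 5 - i}"
        proof (cases "i = 2")
          case True
          thus ?thesis using n by (auto simp: adj_K11 pair23)
        next
          case False
          hence "i = 3" using \<open>i < 4\<close> F2 by simp
          thus ?thesis using n by (auto simp: adj_K11 pair23)
        qed
        hence "(\<Sum>j\<in>{j. j < n \<and> adj (K11plus n) i j}. u i + u j) = (p+1) + (p+1) + (p+p)"
          using True F2 by (simp add: u_def, arith)
        also have "\<dots> = x * v $ i"
        proof -
          have vi: "v $ i = p" using vu[OF i'] True F2 by (simp add: u_def)
          have "(x-4)*p = 2" unfolding p_def using x4 by (simp add: field_simps)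
          thus ?thesis unfolding vi by (simp add: algebra_simps)
        qed
        finally show ?thesis .
      next
        case False
        have "{j. j < n \<and> adj (K11plus n) i j} = {0, 1}" using False F2 i' n
          by (auto simp: adj_K11 pair23)
        hence "(\<Sum>j\<in>{j. j < n \<and> adj (K11plus n) i j}. u i + u j) = (r+1) + (r+1)"
          using False F2 by (simp add: u_def)
        also have "\<dots> = x * v $ i"
        proof -
          have vi: "v $ i = r" using vu[OF i'] False F2 by (simp add: u_def)
          have "(x-2)*r = 2" unfolding r_def using x4 by (simp add: field_simps)
          thus ?thesis unfolding vi by (simp add: algebra_simps)
        qed
        finally show ?thesis .
      qed
    qed
    finally show "(\<Sum>j<gorder (K11plus n). signless_laplacian (K11plus n) $$ (i,j) * v $ j) = x * v $ i" .
  qed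
qed

lemma k11_lower: "n \<ge> 7 \<Longrightarrow> real n + 43/25 < q (K11plus n)"
proof -
  assume n: "n \<ge> 7"
  obtain x where x: "x > real n + 43/25" "fK (real n) x = 0" using fK_root[of "real n"] n by auto
  have "x \<le> q (K11plus n)" by (rule q_ge[OF k11_eig[OF n x]])
  thus ?thesis using x by simp
qed



lemma d_apex:
  fixes y z n s T a b u :: real
  assumes y: "y \<ge> 0" and z: "z \<ge> 0" and n: "n = 8+y+z" and s: "s = 2+y" and T: "T = n + 43/25"
    and a: "a = T-4" and b: "b = T-2" and u: "u = T-7"
  shows "(n-1)*(u*a*b) + (u*a*b/2 + 2*(3*u*b/2) + (s-2)*(3*u*a/2)) + (n-s-2)*(a*b) \<le> T*(u*a*b)"
proof -
  define PP where "PP = (21107252/390625) + (1560917/15625)*z^1 + (19294/625)*z^2 + (61/25)*z^3 + (2211567/15625)*y^1 + (39563/625)*y^1*z^1 + (158/25)*y^1*z^2 + (20269/625)*y^2 + (133/25)*y^2*z^1 + (36/25)*y^3"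
  have e: "T*(u*a*b) - ((n-1)*(u*a*b) + (u*a*b/2 + 2*(3*u*b/2) + (s-2)*(3*u*a/2)) + (n-s-2)*(a*b)) = PP/2"
    unfolding n s T a b u PP_def by (simp add: field_simps power2_eq_square power3_eq_cube) 
  have "0 \<le> PP"
    using y z unfolding PP_def by (intro add_nonneg_nonneg mult_nonneg_nonneg zero_le_power) auto
  thus ?thesis using e by linarith
qed

lemma d_center:
  fixes y z n s T a b u :: real
  assumes y: "y \<ge> 0" and z: "z \<ge> 0" and n: "n = 8+y+z" and s: "s = 2+y" and T: "T = n + 43/25"
    and a: "a = T-4" and b: "b = T-2" and u: "u = T-7"
  shows "(u*a*b/2 + u*a*b) + s*(u*a*b/2) + 2*(3*u*b/2) + (s-2)*(3*u*a/2) \<le> T*(u*a*b/2)"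
proof -
  have e: "T*(u*a*b/2) - ((u*a*b/2 + u*a*b) + s*(u*a*b/2) + 2*(3*u*b/2) + (s-2)*(3*u*a/2))
     = u/2 * ((2532932/15625) + (63497/625)*z^1 + (454/25)*z^2 + (1/1)*z^3 + (25173/625)*y^1 + (497/25)*y^1*z^1 + (2/1)*y^1*z^2 + (43/25)*y^2 + (1/1)*y^2*z^1)"
    unfolding n s T a b u by (simp add: field_simps power2_eq_square power3_eq_cube) 
  have "0 \<le> u/2 * ((2532932/15625) + (63497/625)*z^1 + (454/25)*z^2 + (1/1)*z^3 + (25173/625)*y^1 + (497/25)*y^1*z^1 + (2/1)*y^1*z^2 + (43/25)*y^2 + (1/1)*y^2*z^1)"
    using y z unfolding u T n by (intro add_nonneg_nonneg mult_nonneg_nonneg zero_le_power) auto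
  thus ?thesis using e by linarith
qed

lemma poly_ab:
  fixes x T :: real
  assumes x: "x \<ge> 9" and T: "T = x + 43/25"
  shows "(x-1)*(T-7) + (x-1) \<le> T*(T-7)"
proof -
  define PP where "PP = (1324/625) + (43/25)*(x-9)"
  have e: "T*(T-7) - ((x-1)*(T-7) + (x-1)) = PP" unfolding T PP_def by (simp add: field_simps)
  have "0 \<le> PP" using x unfolding PP_def by simp
  thus ?thesis using e by linarith
qed

lemma poly_c:
  fixes x T :: real
  assumes x: "x \<ge> 7" and T: "T = x + 43/25"
  shows "(x-1)*((T-7)*(T-3)) + 2*(T-7) + (x-3)*(T-3) \<le> T*((T-7)*(T-3))"
proof -
  define y where "y = x - 7"
  define PP where "PP = (6882/15625) + (5323/625)*y^1 + (43/25)*y^2"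
  have e: "T*((T-7)*(T-3)) - ((x-1)*((T-7)*(T-3)) + 2*(T-7) + (x-3)*(T-3)) = PP"
    unfolding T PP_def y_def by (simp add: field_simps power2_eq_square)
  have "0 \<le> PP" using x unfolding PP_def y_def by (intro add_nonneg_nonneg mult_nonneg_nonneg) auto
  thus ?thesis using e by linarith
qed

lemma famA_bound:
  assumes n: "n \<ge> 9" "n = 4*k+1"
  shows "q (gjoin (complete 1) (copies k (complete 4))) \<le> real n + 43/25"
proof -
  let ?G = "gjoin (complete 1) (copies k (complete 4))"
  define T where "T = real n + 43/25"
  define w where "w j = (if j = 0 then T - 7 else 1)" for j :: nat
  have k: "k \<ge> 1" using n by simp
  have N: "gorder ?G = 0+1+4*k" by simp
  have adjG: "\<And>i j. adj ?G i j = fam_adj 0 k (\<lambda>a b. False) i j" by (rule famA)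
  have poly: "real (0+4*k) * (T-7) + (\<Sum>j\<in>{1..<0+1}. w j) + real (4*k) * 1 \<le> T * (T-7)"
  proof -
    have "real (4*k) = real n - 1" using n by simp
    moreover have "real n \<ge> 9" using n by simp
    ultimately show ?thesis using poly_ab[of "real n" T] unfolding T_def by simp
  qed
  show ?thesis unfolding T_def[symmetric]
    by (rule fam_main[OF k adjG N, of w "T-7" 1])
       (use n poly in \<open>auto simp: w_def T_def\<close>)
qed

lemma famB_bound:
  assumes n: "n \<ge> 10" "n = 4*k+2"
  shows "q (gjoin (complete 1) (gunion (complete 1) (copies k (complete 4)))) \<le> real n + 43/25"
proof -
  let ?G = "gjoin (complete 1) (gunion (complete 1) (copies k (complete 4)))"
  define T where "T = real n + 43/25"
  define w where "w j = (if j = 0 then T - 7 else 1)" for j :: nat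
  have k: "k \<ge> 1" using n by simp
  have N: "gorder ?G = 1+1+4*k" by simp
  have adjG: "\<And>i j. adj ?G i j = fam_adj 1 k (adj (complete 1)) i j" using famX[of "complete 1" k] by simp
  have poly: "real (1+4*k) * (T-7) + (\<Sum>j\<in>{1..<1+1}. w j) + real (4*k) * 1 \<le> T * (T-7)"
  proof -
    have "real (1+4*k) = real n - 1" "real (4*k) = real n - 2" using n by simp_all
    moreover have "real n \<ge> 9" using n by simp
    ultimately show ?thesis using poly_ab[of "real n" T] unfolding T_def by (simp add: w_def)
  qed
  have X: "(\<Sum>j\<in>{j. j < gorder ?G \<and> adj ?G i j}. w i + w j) \<le> T * w i" if "1 \<le> i" "i \<le> 1" for i
  proof -
    have i: "i = 1" using that by simp
    have "(\<Sum>j\<in>{j. j < gorder ?G \<and> adj ?G i j}. w i + w j) \<le> (\<Sum>j\<in>{0}. w i + w j)"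
    proof (rule nb_sum_le)
      show "{j. j < gorder ?G \<and> adj ?G i j} \<subseteq> {0}"
      proof
        fix j assume "j \<in> {j. j < gorder ?G \<and> adj ?G i j}"
        hence "fam_adj 1 k (adj (complete 1)) 1 j" using adjG i by auto
        thus "j \<in> {0}" unfolding fam_adj_def by auto
      qed
    qed (use n in \<open>auto simp: w_def T_def\<close>)
    also have "\<dots> \<le> T * w i" using i by (simp add: w_def)
    finally show ?thesis .
  qed
  show ?thesis unfolding T_def[symmetric]
    by (rule fam_main[OF k adjG N, of w "T-7" 1 T, OF _ _ _ poly _ X])
       (use n in \<open>auto simp: w_def T_def\<close>)
qed



lemma gorder_star[simp]: "gorder (star s) = s + 1" by (simp add: star_def)
lemma adj_star: "adj (star s) a b = (a \<le> s \<and> b \<le> s \<and> a \<noteq> b \<and> (a = 0 \<or> b = 0))" by (simp add: star_def)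
lemma gorder_star_plus[simp]: "gorder (star_plus s) = s + 1" by (simp add: star_plus_def)
lemma adj_star_plus: "adj (star_plus s) a b = (adj (star s) a b \<or> {a, b} = {1, 2})" by (simp add: star_plus_def)

lemma famC_bound:
  assumes n: "n \<ge> 7" "n = 4*k+3"
  shows "q (gjoin (complete 1) (gunion (star 1) (copies k (complete 4)))) \<le> real n + 43/25"
proof -
  let ?G = "gjoin (complete 1) (gunion (star 1) (copies k (complete 4)))"
  define T where "T = real n + 43/25"
  define w where "w j = (if j = 0 then (T-7)*(T-3) else if j \<le> 2 then T - 7 else T - 3)" for j :: nat
  have k: "k \<ge> 1" using n by simp
  have T7: "T - 7 > 0" using n unfolding T_def by simp
  have N: "gorder ?G = 2+1+4*k" by simp
  have adjG: "\<And>i j. adj ?G i j = fam_adj 2 k (adj (star 1)) i j" 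
  proof -
    have g2: "gorder (star 1) = 2" by simp
    show "\<And>i j. adj ?G i j = fam_adj 2 k (adj (star 1)) i j" using famX[of "star 1" k, unfolded g2] by blast
  qed
  have poly: "real (2+4*k) * ((T-7)*(T-3)) + (\<Sum>j\<in>{1..<2+1}. w j) + real (4*k) * (T-3) \<le> T * ((T-7)*(T-3))"
  proof -
    have "real (2+4*k) = real n - 1" "real (4*k) = real n - 3" using n by simp_all
    moreover have "(\<Sum>j\<in>{1..<2+1}. w j) = 2*(T-7)" by (simp add: w_def numeral_eq_Suc)
    moreover have "real n \<ge> 7" using n by simp
    ultimately show ?thesis using poly_c[of "real n" T] unfolding T_def by simp
  qed
  have X: "(\<Sum>j\<in>{j. j < gorder ?G \<and> adj ?G i j}. w i + w j) \<le> T * w i" if "1 \<le> i" "i \<le> 2" for i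
  proof -
    have "(\<Sum>j\<in>{j. j < gorder ?G \<and> adj ?G i j}. w i + w j) \<le> (\<Sum>j\<in>{0, 3-i}. w i + w j)"
    proof (rule nb_sum_le)
      show "{j. j < gorder ?G \<and> adj ?G i j} \<subseteq> {0, 3-i}"
      proof
        fix j assume "j \<in> {j. j < gorder ?G \<and> adj ?G i j}"
        hence "fam_adj 2 k (adj (star 1)) i j" using adjG by auto
        thus "j \<in> {0, 3-i}" using that unfolding fam_adj_def adj_star by auto
      qed
    qed (use T7 in \<open>auto simp: w_def\<close>)
    also have "\<dots> = (w i + w 0) + (w i + w (3-i))" using that by simp
    also have "\<dots> = T * w i" using that by (simp add: w_def algebra_simps)
    finally show ?thesis .
  qed
  have A0: "(T-7)*(T-3) > 0" using T7 by simp
  have k4: "(T-7)*(T-3) + 7*(T-3) \<le> T*(T-3)" by (simp add: algebra_simps)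
  show ?thesis unfolding T_def[symmetric]
    by (rule fam_main[OF k adjG N, of w "(T-7)*(T-3)" "T-3" T, OF _ _ _ poly k4 X])
       (use T7 A0 in \<open>auto simp: w_def\<close>)
qed



lemma pair12: "({a,b} = {1,2::nat}) \<longleftrightarrow> (a=1 \<and> b=2) \<or> (a=2 \<and> b=1)"
  by (auto simp: doubleton_eq_iff)

lemma pair12': "({a,b} = {Suc 0,2::nat}) \<longleftrightarrow> (a=1 \<and> b=2) \<or> (a=2 \<and> b=1)"
  by (auto simp: doubleton_eq_iff)

lemma famD_bound:
  assumes s: "s \<ge> 2" and n: "n = s+2+4*k" and k: "k \<ge> 1"
  shows "q (gjoin (complete 1) (gunion (star_plus s) (copies k (complete 4)))) \<le> real n + 43/25"
proof -
  let ?G = "gjoin (complete 1) (gunion (star_plus s) (copies k (complete 4)))"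
  define T where "T = real n + 43/25"
  define a where "a = T - 4"
  define b where "b = T - 2"
  define u where "u = T - 7"
  define A where "A = u*a*b"
  define C where "C = u*a*b/2"
  define P where "P = 3*u*b/2"
  define L where "L = 3*u*a/2"
  define K where "K = a*b"
  define w where "w j = (if j = 0 then A else if j = 1 then C else if j \<le> 3 then P else if j \<le> s+1 then L else K)" for j :: nat
  have u0: "u > 0" "a > 0" "b > 0" using n k s unfolding u_def a_def b_def T_def by simp_all
  have pos: "A > 0" "C > 0" "P > 0" "L > 0" "K > 0" using u0 unfolding A_def C_def P_def L_def K_def by simp_all
  have wpos: "\<And>j. w j > 0" using pos unfolding w_def by simp
  have N: "gorder ?G = (s+1)+1+4*k" by simp
  have adjG: "\<And>i j. adj ?G i j = fam_adj (s+1) k (adj (star_plus s)) i j"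
    using famX[of "star_plus s" k, unfolded gorder_star_plus] by blast
  have SW2: "(\<Sum>j\<in>{2..<s+2}. w j) = 2*P + real (s-2) * L"
  proof -
    have "(\<Sum>j\<in>{2..<s+2}. w j) = (\<Sum>j\<in>{2..<4}. w j) + (\<Sum>j\<in>{4..<s+2}. w j)"
      using s by (intro sum.atLeastLessThan_concat[symmetric]) auto
    also have "(\<Sum>j\<in>{2..<4}. w j) = 2*P" by (simp add: w_def numeral_eq_Suc)
    also have "(\<Sum>j\<in>{4..<s+2}. w j) = (\<Sum>j\<in>{4..<s+2}. L)" by (rule sum.cong) (auto simp: w_def)
    also have "\<dots> = real (s-2) * L" by simp
    finally show ?thesis .
  qed
  have SW1: "(\<Sum>j\<in>{1..<s+1+1}. w j) = C + (2*P + real (s-2) * L)"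
  proof -
    have "(\<Sum>j\<in>{1..<s+1+1}. w j) = (\<Sum>j\<in>{1..<2}. w j) + (\<Sum>j\<in>{2..<s+2}. w j)"
      using s sum.atLeastLessThan_concat[of 1 2 "s+2" w] by (simp add: add.assoc)
    thus ?thesis using SW2 by (simp add: w_def numeral_eq_Suc)
  qed
  have yz: "real s - 2 \<ge> 0" "real n - real s - 6 \<ge> 0" using s n k by auto
  have rs: "real (s+1+4*k) = real n - 1" "real (s-2) = real s - 2" "real (4*k) = real n - real s - 2"
    using n s by auto
  have apex: "real (s+1+4*k) * A + (\<Sum>j\<in>{1..<s+1+1}. w j) + real (4*k) * K \<le> T * A"
  proof -
    have da: "(real n-1)*(u*a*b) + (u*a*b/2 + 2*(3*u*b/2) + (real s-2)*(3*u*a/2)) + (real n-real s-2)*(a*b) \<le> T*(u*a*b)"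
      by (rule d_apex[OF yz]) (auto simp: T_def a_def b_def u_def)
    show ?thesis unfolding SW1 rs A_def C_def P_def L_def K_def using da by linarith
  qed
  have dc: "(u*a*b/2 + u*a*b) + real s*(u*a*b/2) + 2*(3*u*b/2) + (real s-2)*(3*u*a/2) \<le> T*(u*a*b/2)"
    by (rule d_center[OF yz]) (auto simp: T_def a_def b_def u_def)
  have k4: "A + 7 * K \<le> T * K" unfolding A_def K_def u_def by (simp add: algebra_simps)
  have X: "(\<Sum>j\<in>{j. j < gorder ?G \<and> adj ?G i j}. w i + w j) \<le> T * w i" if i: "1 \<le> i" "i \<le> s+1" for i
  proof -
    have nbi: "fam_adj (s+1) k (adj (star_plus s)) i j \<Longrightarrow> j = 0 \<or> (1 \<le> j \<and> j \<le> s+1 \<and> adj (star_plus s) (i-1) (j-1))" for j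
      using i unfolding fam_adj_def by auto
    show ?thesis
    proof (cases "i = 1")
      case True
      have "(\<Sum>j\<in>{j. j < gorder ?G \<and> adj ?G i j}. w i + w j) \<le> (\<Sum>j\<in>insert 0 {2..<s+2}. w i + w j)"
      proof (rule nb_sum_le)
        show "{j. j < gorder ?G \<and> adj ?G i j} \<subseteq> insert 0 {2..<s+2}"
        proof
          fix j assume "j \<in> {j. j < gorder ?G \<and> adj ?G i j}"
          hence "fam_adj (s+1) k (adj (star_plus s)) i j" using adjG by auto
          from nbi[OF this] show "j \<in> insert 0 {2..<s+2}" using True
            by (auto simp: adj_star_plus adj_star pair12 pair12')
        qed
      qed (use wpos in \<open>auto intro: add_nonneg_nonneg less_imp_le\<close>)
      also have "\<dots> = (C + A) + (real s * C + (2*P + real (s-2) * L))"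
      proof -
        have wi: "w i = C" using True by (simp add: w_def)
        have w0: "w 0 = A" by (simp add: w_def)
        have e0: "(\<Sum>j\<in>insert 0 {2..<s+2}. C + w j) = (C + A) + (\<Sum>j\<in>{2..<s+2}. C + w j)"
          by (subst sum.insert) (auto simp: w0)
        have e1: "(\<Sum>j\<in>{2..<s+2}. C + w j) = (\<Sum>j\<in>{2..<s+2}. C) + (\<Sum>j\<in>{2..<s+2}. w j)"
          by (rule sum.distrib)
        have e2: "(\<Sum>j\<in>{2..<s+2}. C) = real s * C" by (simp only: sum_constant card_atLeastLessThan) simp
        show ?thesis unfolding wi e0 e1 e2 SW2 ..
      qed
      also have "\<dots> \<le> T * w i"
        unfolding rs A_def C_def P_def L_def K_def using True dc
        by (simp add: w_def C_def)
      finally show ?thesis .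
    next
      case F1: False
      show ?thesis
      proof (cases "i \<le> 3")
        case True
        have "(\<Sum>j\<in>{j. j < gorder ?G \<and> adj ?G i j}. w i + w j) \<le> (\<Sum>j\<in>{0, 1, 5-i}. w i + w j)"
        proof (rule nb_sum_le)
          show "{j. j < gorder ?G \<and> adj ?G i j} \<subseteq> {0, 1, 5-i}"
          proof
            fix j assume "j \<in> {j. j < gorder ?G \<and> adj ?G i j}"
            hence "fam_adj (s+1) k (adj (star_plus s)) i j" using adjG by auto
            from nbi[OF this] show "j \<in> {0, 1, 5-i}" using True F1 i
              by (auto simp: adj_star_plus adj_star pair12 pair12')
          qed
        qed (use wpos in \<open>auto intro: add_nonneg_nonneg less_imp_le\<close>)
        also have "\<dots> = (P + A) + (P + C) + (P + P)"
          using True F1 i by (simp add: w_def, arith)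
        also have "\<dots> = T * w i"
          using True F1 i by (simp add: w_def P_def A_def C_def a_def b_def u_def field_simps)
        finally show ?thesis .
      next
        case False
        have "(\<Sum>j\<in>{j. j < gorder ?G \<and> adj ?G i j}. w i + w j) \<le> (\<Sum>j\<in>{0, 1}. w i + w j)"
        proof (rule nb_sum_le)
          show "{j. j < gorder ?G \<and> adj ?G i j} \<subseteq> {0, 1}"
          proof
            fix j assume "j \<in> {j. j < gorder ?G \<and> adj ?G i j}"
            hence "fam_adj (s+1) k (adj (star_plus s)) i j" using adjG by auto
            from nbi[OF this] show "j \<in> {0, 1}" using False F1 i
              by (auto simp: adj_star_plus adj_star pair12 pair12')
          qed
        qed (use wpos in \<open>auto intro: add_nonneg_nonneg less_imp_le\<close>)
        also have "\<dots> = (L + A) + (L + C)"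
          using False F1 i by (simp add: w_def)
        also have "\<dots> = T * w i"
          using False F1 i by (simp add: w_def L_def A_def C_def a_def b_def u_def field_simps)
        finally show ?thesis .
      qed
    qed
  qed
  show ?thesis unfolding T_def[symmetric]
    by (rule fam_main[OF k adjG N wpos _ _ apex k4 X]) (use s in \<open>auto simp: w_def\<close>)
qed



theorem lemma2p10:
  fixes n :: nat and G :: graph
  assumes "n \<ge> 7"
    and "(n mod 4 = 1 \<and> G = gjoin (complete 1) (copies ((n - 1) div 4) (complete 4)))
       \<or> (n mod 4 = 2 \<and> G = gjoin (complete 1)
              (gunion (complete 1) (copies ((n - 2) div 4) (complete 4))))
       \<or> (n mod 4 = 3 \<and> G = gjoin (complete 1)
              (gunion (star 1) (copies ((n - 3) div 4) (complete 4))))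
       \<or> (\<exists>s. 2 \<le> s \<and> s + 6 \<le> n \<and> 4 dvd (n - s - 2) \<and>
              G = gjoin (complete 1) (gunion (star_plus s) (copies ((n - s - 2) div 4) (complete 4))))"
  shows "q G < q (K11plus n)"
proof -
  have low: "real n + 43/25 < q (K11plus n)" by (rule k11_lower[OF assms(1)])
  have "q G \<le> real n + 43/25"
    using assms(2)
  proof (elim disjE conjE exE)
    assume h: "n mod 4 = 1" and G: "G = gjoin (complete 1) (copies ((n - 1) div 4) (complete 4))"
    have "n \<ge> 9" "n = 4 * ((n - 1) div 4) + 1" using h assms(1) by presburger+
    from famA_bound[OF this] show ?thesis unfolding G .
  next
    assume h: "n mod 4 = 2" and G: "G = gjoin (complete 1) (gunion (complete 1) (copies ((n - 2) div 4) (complete 4)))"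
    have "n \<ge> 10" "n = 4 * ((n - 2) div 4) + 2" using h assms(1) by presburger+
    from famB_bound[OF this] show ?thesis unfolding G .
  next
    assume h: "n mod 4 = 3" and G: "G = gjoin (complete 1) (gunion (star 1) (copies ((n - 3) div 4) (complete 4)))"
    have "n \<ge> 7" "n = 4 * ((n - 3) div 4) + 3" using h assms(1) by presburger+
    from famC_bound[OF this] show ?thesis unfolding G .
  next
    fix s assume s: "2 \<le> s" "s + 6 \<le> n" "4 dvd (n - s - 2)"
      and G: "G = gjoin (complete 1) (gunion (star_plus s) (copies ((n - s - 2) div 4) (complete 4)))"
    have "n = s + 2 + 4 * ((n - s - 2) div 4)" "(n - s - 2) div 4 \<ge> 1" using s by (auto elim!: dvdE)
    from famD_bound[OF s(1) this] show ?thesis unfolding G .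
  qed
  thus ?thesis using low by linarith
qed

end
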